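(* In the roundabout exploration process described in the context, for every $t\in[N]$ there are no three distinct agents $a_i,a_j,a_l\in A(t)$ with $D_i(t)\cap D_j(t)\cap D_l(t)\neq\emptyset$.
   Context: Let $n\ge 2$ and $k$ be natural numbers, $T$ a tree on an $n$-element vertex set $V$, and $N=2(n-1)$. Fix a root $r$ and a DFS tour of $T$ starting and ending at $r$ that traverses each edge of $T$ exactly twice, giving a cyclic vertex sequence $(v_1,\dots,v_N,v_{N+1})$ with $v_{N+1}=v_1=r$, and tour edges $e_i=\{v_i,v_{i+1}\}$ for $i\in[N]$. For $i,j\in[N]$ the circular interval $[\![i,j]\!]$ is $\{i,i+1,\dots,j\}$ if $i\le j$ and $\{i,\dots,N,1,\dots,j\}$ if $i>j$. Let $\langle G_1,\dots,G_N\rangle$ be graphs on $V$, each containing all but at most $k$ edges of $T$. Roundabout exploration process: agents $a_1,\dots,a_N$ with initial states $s_i(0)=i$. For steps $t=1,\dots,N$: (Movement) for every $i\in[N]$, if $s_i(t-1)=q$ then $s_i(t)=(q\bmod N)+1$ if $e_q\in E(G_t)$, and $s_i(t)=q$ otherwise. Let $D_i(t)=[\![i,s_i(t)]\!]$ and $D_i(0)=\{i\}$. (Elimination) $A(0)=\{a_1,\dots,a_N\}$; $A(t)$ is obtained from $A(t-1)$ by repeatedly removing an arbitrary agent $a_i$ of the current set with $D_i(t)\subseteq\bigcup D_j(t)$ over the other agents $a_j$ of the current set, until no such agent remains. *)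

theory Defs
  imports Main
begin

definition graph_on :: "'a set \<Rightarrow> 'a set set \<Rightarrow> bool" where
  "graph_on V E \<longleftrightarrow> E \<subseteq> {{u, w} | u w. u \<in> V \<and> w \<in> V \<and> u \<noteq> w}"

definition connected_on :: "'a set \<Rightarrow> 'a set set \<Rightarrow> bool" where
  "connected_on V E \<longleftrightarrow>
     (\<forall>u\<in>V. \<forall>w\<in>V. (\<lambda>x y. {x, y} \<in> E)\<^sup>*\<^sup>* u w)"

definition is_tree :: "'a set \<Rightarrow> 'a set set \<Rightarrow> bool" where
  "is_tree V E \<longleftrightarrow> finite V \<and> V \<noteq> {} \<and> graph_on V E \<and> connected_on V E
                    \<and> card E = card V - 1"

text \<open>A closed tour (v_1,...,v_{N+1}), N = 2(n-1), starting and ending at the root r,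
  whose tour edges are edges of T and which traverses every edge of T exactly twice
  (for a tree this is exactly a DFS / Euler tour).\<close>
definition tree_tour :: "'a set \<Rightarrow> 'a set set \<Rightarrow> 'a \<Rightarrow> nat \<Rightarrow> (nat \<Rightarrow> 'a) \<Rightarrow> bool" where
  "tree_tour V ET r N v \<longleftrightarrow>
     r \<in> V \<and> v 1 = r \<and> v (N + 1) = r \<and>
     (\<forall>i\<in>{1..N}. {v i, v (Suc i)} \<in> ET) \<and>
     (\<forall>e\<in>ET. card {i \<in> {1..N}. {v i, v (Suc i)} = e} = 2)"

definition cinterval :: "nat \<Rightarrow> nat \<Rightarrow> nat \<Rightarrow> nat set" where
  "cinterval N i j = (if i \<le> j then {i..j} else {i..N} \<union> {1..j})"

primrec state :: "nat \<Rightarrow> (nat \<Rightarrow> 'a) \<Rightarrow> (nat \<Rightarrow> 'a set set) \<Rightarrow> nat \<Rightarrow> nat \<Rightarrow> nat" where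
  "state N v G i 0 = i"
| "state N v G i (Suc t) =
     (let q = state N v G i t in
      if {v q, v (Suc q)} \<in> G (Suc t) then (q mod N) + 1 else q)"

definition Dset :: "nat \<Rightarrow> (nat \<Rightarrow> 'a) \<Rightarrow> (nat \<Rightarrow> 'a set set) \<Rightarrow> nat \<Rightarrow> nat \<Rightarrow> nat set" where
  "Dset N v G i t = (if t = 0 then {i} else cinterval N i (state N v G i t))"

text \<open>One elimination step: remove an agent whose interval is covered by the others
  (agents a_i are identified with their indices i).\<close>
definition elim_step :: "(nat \<Rightarrow> nat set) \<Rightarrow> nat set \<Rightarrow> nat set \<Rightarrow> bool" where
  "elim_step D S S' \<longleftrightarrow>
     (\<exists>i\<in>S. D i \<subseteq> (\<Union>j\<in>S - {i}. D j) \<and> S' = S - {i})"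

definition elim_result :: "(nat \<Rightarrow> nat set) \<Rightarrow> nat set \<Rightarrow> nat set \<Rightarrow> bool" where
  "elim_result D S S' \<longleftrightarrow>
     (elim_step D)\<^sup>*\<^sup>* S S' \<and> \<not> (\<exists>S''. elim_step D S' S'')"

end

theory Submission
  imports Defs
begin

lemma modc: "-(N::int) < v \<Longrightarrow> v < N \<Longrightarrow> v mod N = (if v \<ge> 0 then v else v + N)"
proof -
  assume a: "-N < v" "v < N"
  show ?thesis
  proof (cases "v \<ge> 0")
    case True then show ?thesis using a by simp
  next
    case False
    then have "v mod N = (v + N) mod N" by simp
    also have "\<dots> = v + N" using a False by (intro mod_pos_pos_trivial) auto
    finally show ?thesis using False by simp
  qed
qed

lemma char:
  assumes "i \<in> {1..N}" "s \<in> {1..N}" "p \<in> {1..N}" "x \<in> {1..N}" "p \<in> cinterval N i s"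
  shows "x \<in> cinterval N i s \<longleftrightarrow>
    ((int x - int p) mod int N \<le> (int s - int p) mod int N \<or>
     (int p - int x) mod int N \<le> (int p - int i) mod int N)"
proof -
  have N: "N \<ge> 1" using assms by auto
  have m1: "(int x - int p) mod int N = (if int x - int p \<ge> 0 then int x - int p else int x - int p + int N)"
    using assms by (intro modc) auto
  have m2: "(int s - int p) mod int N = (if int s - int p \<ge> 0 then int s - int p else int s - int p + int N)"
    using assms by (intro modc) auto
  have m3: "(int p - int x) mod int N = (if int p - int x \<ge> 0 then int p - int x else int p - int x + int N)"
    using assms by (intro modc) auto
  have m4: "(int p - int i) mod int N = (if int p - int i \<ge> 0 then int p - int i else int p - int i + int N)"
    using assms by (intro modc) auto
  show ?thesis using assms unfolding m1 m2 m3 m4 cinterval_def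
    by (auto split: if_splits)
qed


lemma cover:
  assumes N: "N \<ge> 1"
    and T: "T \<subseteq> {1..N}" "finite T" "T \<noteq> {}"
    and st: "\<And>y. y \<in> T \<Longrightarrow> st y \<in> {1..N}"
    and p: "p \<in> {1..N}" "\<And>y. y \<in> T \<Longrightarrow> p \<in> cinterval N y (st y)"
  shows "\<exists>X\<in>T. \<exists>Y\<in>T. \<forall>Z\<in>T. cinterval N Z (st Z) \<subseteq> cinterval N X (st X) \<union> cinterval N Y (st Y)"
proof -
  define a where "a y = (int p - int y) mod int N" for y
  define b where "b y = (int (st y) - int p) mod int N" for y
  have "Max (a ` T) \<in> a ` T" using T by (intro Max_in) auto
  then obtain X where X: "X \<in> T" "a X = Max (a ` T)" by force
  have "Max (b ` T) \<in> b ` T" using T by (intro Max_in) auto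
  then obtain Y where Y: "Y \<in> T" "b Y = Max (b ` T)" by force
  have "cinterval N Z (st Z) \<subseteq> cinterval N X (st X) \<union> cinterval N Y (st Y)" if Z: "Z \<in> T" for Z
  proof
    fix x assume x: "x \<in> cinterval N Z (st Z)"
    have xr: "x \<in> {1..N}" using x T Z st[OF Z] unfolding cinterval_def by (auto split: if_splits)
    have aZ: "a Z \<le> a X" using X Z T by simp
    have bZ: "b Z \<le> b Y" using Y Z T by simp
    have c: "\<And>y. y \<in> T \<Longrightarrow> x \<in> cinterval N y (st y) \<longleftrightarrow>
      ((int x - int p) mod int N \<le> b y \<or> (int p - int x) mod int N \<le> a y)"
      unfolding a_def b_def using T st p xr by (intro char) auto
    from c[OF Z] x have "(int x - int p) mod int N \<le> b Z \<or> (int p - int x) mod int N \<le> a Z" by simp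
    then show "x \<in> cinterval N X (st X) \<union> cinterval N Y (st Y)"
      using c[OF X(1)] c[OF Y(1)] aZ bZ by auto
  qed
  then show ?thesis using X Y by blast
qed

lemma elim_step_sub: "elim_step D S S' \<Longrightarrow> S' \<subseteq> S"
  unfolding elim_step_def by auto

lemma elim_rt_sub: "(elim_step D)\<^sup>*\<^sup>* S S' \<Longrightarrow> S' \<subseteq> S"
  by (induction rule: rtranclp_induct) (auto dest: elim_step_sub)

lemma state_range: "N \<ge> 1 \<Longrightarrow> i \<in> {1..N} \<Longrightarrow> state N v G i t \<in> {1..N}"
proof (induction t)
  case (Suc t)
  have h: "Suc (state N v G i t mod N) \<le> N" using Suc.prems by (simp add: Suc_le_eq)
  then show ?case using Suc.IH[OF Suc.prems] by (auto simp: Let_def)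
qed simp

theorem lemma6:
  fixes V :: "'a set" and ET :: "'a set set" and n k N :: nat and r :: 'a
    and v :: "nat \<Rightarrow> 'a" and G :: "nat \<Rightarrow> 'a set set" and A :: "nat \<Rightarrow> nat set"
  assumes "n \<ge> 2" and "card V = n"
    and "is_tree V ET"
    and "N = 2 * (n - 1)"
    and "tree_tour V ET r N v"
    and "\<forall>t\<in>{1..N}. graph_on V (G t) \<and> card (ET - G t) \<le> k"
    and "A 0 = {1..N}"
    and "\<forall>t\<in>{1..N}. elim_result (\<lambda>i. Dset N v G i t) (A (t - 1)) (A t)"
    and "t \<in> {1..N}"
  shows "\<not> (\<exists>i\<in>A t. \<exists>j\<in>A t. \<exists>l\<in>A t. i \<noteq> j \<and> i \<noteq> l \<and> j \<noteq> l \<and>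
             Dset N v G i t \<inter> Dset N v G j t \<inter> Dset N v G l t \<noteq> {})"
  proof
  assume ex: "\<exists>i\<in>A t. \<exists>j\<in>A t. \<exists>l\<in>A t. i \<noteq> j \<and> i \<noteq> l \<and> j \<noteq> l \<and>
             Dset N v G i t \<inter> Dset N v G j t \<inter> Dset N v G l t \<noteq> {}"
  have N: "N \<ge> 1" using assms(1,4) by simp
  have t: "1 \<le> t" "t \<le> N" using assms(9) by auto
  have Asub: "\<forall>t'. t' \<le> N \<longrightarrow> A t' \<subseteq> {1..N}"
  proof
    fix t' show "t' \<le> N \<longrightarrow> A t' \<subseteq> {1..N}"
    proof (induction t')
      case 0 then show ?case using assms(7) by simp
    next
      case (Suc m)
      have "elim_result (\<lambda>i. Dset N v G i (Suc m)) (A m) (A (Suc m))" if "Suc m \<le> N"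
        using assms(8) that by (metis One_nat_def atLeastAtMost_iff diff_Suc_1 le_add1 plus_1_eq_Suc)
      then show ?case using Suc elim_rt_sub unfolding elim_result_def by fastforce
    qed
  qed
  then have At: "A t \<subseteq> {1..N}" using t by auto
  define D where "D = (\<lambda>i. Dset N v G i t)"
  define st where "st = (\<lambda>i. state N v G i t)"
  have Deq: "D i = cinterval N i (st i)" for i using t unfolding D_def st_def Dset_def by simp
  from ex obtain i j l p where ijl: "i \<in> A t" "j \<in> A t" "l \<in> A t" "i \<noteq> j" "i \<noteq> l" "j \<noteq> l"
    and pD: "p \<in> D i" "p \<in> D j" "p \<in> D l" unfolding D_def by blast
  let ?T = "{i, j, l}"
  have Tsub: "?T \<subseteq> {1..N}" using ijl At by auto
  have str: "\<And>y. y \<in> ?T \<Longrightarrow> st y \<in> {1..N}" unfolding st_def using Tsub N state_range by blast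
  have pr: "p \<in> {1..N}" using pD(1) Deq[of i] str[of i] Tsub unfolding cinterval_def
    by (auto split: if_splits)
  have pc: "\<And>y. y \<in> ?T \<Longrightarrow> p \<in> cinterval N y (st y)" using pD Deq by auto
  have fin: "finite ?T" and ne: "?T \<noteq> {}" by auto
  have "\<exists>X\<in>?T. \<exists>Y\<in>?T. \<forall>Z\<in>?T. cinterval N Z (st Z) \<subseteq> cinterval N X (st X) \<union> cinterval N Y (st Y)"
    by (rule cover[where st=st and p=p and T="?T" and N=N, OF N Tsub fin ne str pr pc])
  then obtain X Y where XY: "X \<in> ?T" "Y \<in> ?T"
    "\<forall>Z\<in>?T. D Z \<subseteq> D X \<union> D Y" unfolding Deq by blast
  have "\<exists>Z\<in>?T. Z \<noteq> X \<and> Z \<noteq> Y" using XY(1,2) ijl(4-6) by auto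
  then obtain Z where Z: "Z \<in> ?T" "Z \<noteq> X" "Z \<noteq> Y" by blast
  have XA: "X \<in> A t - {Z}" "Y \<in> A t - {Z}" using XY(1,2) Z ijl(1-3) by auto
  have "D Z \<subseteq> D X \<union> D Y" using XY(3) Z(1) by blast
  also have "\<dots> \<subseteq> (\<Union>y\<in>A t - {Z}. D y)" using XA by blast
  finally have "D Z \<subseteq> (\<Union>y\<in>A t - {Z}. D y)" .
  moreover have "Z \<in> A t" using Z ijl(1-3) by auto
  ultimately have "elim_step D (A t) (A t - {Z})" unfolding elim_step_def by blast
  moreover have "elim_result D (A (t - 1)) (A t)" using assms(8,9) unfolding D_def by blast
  ultimately show False unfolding elim_result_def by blast
qed


end
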